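(* Let $T>0$, $\beta=1/T$, let $I\ge 1$ be an integer, let $E_1,\dots,E_I>0$, and let $p=2\pi T m$ with $m\in\mathbb{Z}$. Define the Matsubara $D$-function of the two-vertex graph with $I$ internal lines by $$D(p,E,T)=\Big(\prod_{j=1}^I 2E_j\Big)\,T^{I-1}\sum_{n_1,\dots,n_I\in\mathbb{Z}}\ \prod_{j=1}^I\frac{1}{(2\pi T n_j)^2+E_j^2}\;\delta_{n_1+\cdots+n_I,\,m},$$ and the zero-temperature $D$-function, for real $\omega$ and real $E_1,\dots,E_I$, by $$D_0(\omega,E)=-\left(\frac{1}{i\omega-E_{\rm tot}}-\frac{1}{i\omega+E_{\rm tot}}\right),\qquad E_{\rm tot}=\sum_{j=1}^I E_j .$$ Assume that $ip-\sum_{j=1}^I\sigma_jE_j\neq 0$ for every choice of signs $\sigma_j\in\{\pm1\}$. Then: (i) $\prod_{j=1}^I(1+\mathcal{S}_j)\,D_0(\omega,E)=0$; (ii) $D(p,E,T)=\Big[\prod_{j=1}^I\big(1+n(E_j)(1+\mathcal{S}_j)\big)\Big]D_0(\omega,E)\Big|_{\omega=p}$; (iii) consequently $D(p,E,T)=\sum_{J\subsetneq\{1,\dots,I\}}\ \prod_{j\in J}n(E_j)(1+\mathcal{S}_j)\,D_0(\omega,E)\Big|_{\omega=p}$, the sum running over all proper subsets $J$ (including $J=\emptyset$, contributing $D_0$ itself), i.e. over all sets of internal lines whose removal leaves the two-vertex graph connected.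
   Context: $n(E)=(e^{\beta E}-1)^{-1}$ is the Bose–Einstein factor. $\mathcal{S}_j$ is the reflection operator in the variable $E_j$: $(\mathcal{S}_jf)(E_1,\dots,E_j,\dots,E_I)=f(E_1,\dots,-E_j,\dots,E_I)$. In the operator products, the reflections act only on $D_0$ (regarded as a function of independent real variables $E_1,\dots,E_I$), the factors $n(E_j)$ are multiplicative constants evaluated at the given positive $E_j$, and after applying the operators one evaluates at the given positive $E_j$ and at $\omega=p$. $\delta_{a,b}$ is the Kronecker delta. *)

theory Defs
  imports "HOL-Analysis.Analysis"
begin

(* Internal lines are indexed by j \<in> {0..<I} (paper: 1..I).
   Energies E :: nat \<Rightarrow> real; only the values E j for j < I matter. *)

type_synonym efun = "(nat \<Rightarrow> real) \<Rightarrow> complex"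

definition bose :: "real \<Rightarrow> real \<Rightarrow> real" where
  "bose T E = 1 / (exp (E / T) - 1)"

definition Dmats :: "nat \<Rightarrow> int \<Rightarrow> (nat \<Rightarrow> real) \<Rightarrow> real \<Rightarrow> real" where
  "Dmats I m E T =
     (\<Prod>j<I. 2 * E j) * T ^ (I - 1) *
     (\<Sum>\<^sub>\<infinity> n \<in> {n \<in> {..<I} \<rightarrow>\<^sub>E (UNIV :: int set). (\<Sum>j<I. n j) = m}.
        \<Prod>j<I. 1 / ((2 * pi * T * of_int (n j))\<^sup>2 + (E j)\<^sup>2))"

definition D0 :: "nat \<Rightarrow> real \<Rightarrow> efun" where
  "D0 I \<omega> E = - (1 / (\<i> * complex_of_real \<omega> - complex_of_real (\<Sum>j<I. E j))
                  - 1 / (\<i> * complex_of_real \<omega> + complex_of_real (\<Sum>j<I. E j)))"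

definition refl_op :: "nat \<Rightarrow> efun \<Rightarrow> efun" where
  "refl_op j f = (\<lambda>E. f (E(j := - E j)))"

definition one_plus_S :: "nat \<Rightarrow> efun \<Rightarrow> efun" where
  "one_plus_S j f = (\<lambda>E. f E + refl_op j f E)"

definition c_one_plus_S :: "complex \<Rightarrow> nat \<Rightarrow> efun \<Rightarrow> efun" where
  "c_one_plus_S c j f = (\<lambda>E. c * one_plus_S j f E)"

definition one_plus_c_S :: "complex \<Rightarrow> nat \<Rightarrow> efun \<Rightarrow> efun" where
  "one_plus_c_S c j f = (\<lambda>E. f E + c_one_plus_S c j f E)"

(* product (composition) of the commuting operators A j, j \<in> J *)
definition ops_prod :: "(nat \<Rightarrow> efun \<Rightarrow> efun) \<Rightarrow> nat set \<Rightarrow> efun \<Rightarrow> efun" where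
  "ops_prod A J f = foldr A (sorted_list_of_set J) f"

end

theory Submission
  imports Defs
begin

lemma digamma_refl:
  fixes z :: complex
  assumes z: "z \<notin> \<int>"
  shows "Digamma (1 - z) - Digamma z = of_real pi * cos (of_real pi * z) / sin (of_real pi * z)"
proof -
  let ?f = "\<lambda>z::complex. Gamma z * Gamma (1 - z) * sin (of_real pi * z)"
  have z1: "1 - z \<notin> \<int>" using z Ints_diff[of 1 "1 - z"] by auto
  have zn: "z \<notin> \<int>\<^sub>\<le>\<^sub>0" "1 - z \<notin> \<int>\<^sub>\<le>\<^sub>0" using z z1 nonpos_Ints_subset_Ints by auto
  have sin0: "sin (of_real pi * z) \<noteq> 0" using z by (subst sin_eq_0) auto
  have d1: "(?f has_field_derivative
      (Gamma z * Digamma z * Gamma (1 - z) * sin (of_real pi * z)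
       - Gamma z * (Gamma (1 - z) * Digamma (1 - z)) * sin (of_real pi * z)
       + Gamma z * Gamma (1 - z) * (cos (of_real pi * z) * of_real pi))) (at z)"
    using zn by (auto intro!: derivative_eq_intros simp: algebra_simps)
  have ev: "eventually (\<lambda>t. t \<in> - \<int>) (nhds z)"
    using z by (intro eventually_nhds_in_open) (auto simp: open_Compl)
  have ev2: "eventually (\<lambda>t. ?f t = of_real pi) (nhds z)"
    using ev
  proof eventually_elim
    case (elim t)
    then have "t \<notin> \<int>" by auto
    then have "sin (of_real pi * t) \<noteq> 0" by (subst sin_eq_0) auto
    then show ?case using Gamma_reflection_complex[of t] by (simp add: field_simps)
  qed
  have d2: "(?f has_field_derivative 0) (at z)"
    by (subst DERIV_cong_ev[OF refl ev2 refl]) (rule DERIV_const)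
  have eq: "Gamma z * Digamma z * Gamma (1 - z) * sin (of_real pi * z)
       - Gamma z * (Gamma (1 - z) * Digamma (1 - z)) * sin (of_real pi * z)
       + Gamma z * Gamma (1 - z) * (cos (of_real pi * z) * of_real pi) = 0"
    using DERIV_unique[OF d1 d2] .
  have gg: "Gamma z * Gamma (1 - z) \<noteq> 0" using Gamma_reflection_complex[of z] sin0 by simp
  from eq have "(Gamma z * Gamma (1 - z)) * ((Digamma z - Digamma (1 - z)) * sin (of_real pi * z) + cos (of_real pi * z) * of_real pi) = 0"
    by (simp add: algebra_simps)
  with gg have "(Digamma z - Digamma (1 - z)) * sin (of_real pi * z) + cos (of_real pi * z) * of_real pi = 0"
    by simp
  with sin0 show ?thesis by (simp add: field_simps)
qed

lemma polygamma_refl: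
  fixes z :: complex
  assumes z: "z \<notin> \<int>"
  shows "Polygamma 1 z + Polygamma 1 (1 - z) = of_real pi ^ 2 / sin (of_real pi * z) ^ 2"
proof -
  have z1: "1 - z \<notin> \<int>" using z Ints_diff[of 1 "1 - z"] by auto
  have zn: "z \<notin> \<int>\<^sub>\<le>\<^sub>0" "1 - z \<notin> \<int>\<^sub>\<le>\<^sub>0" using z z1 nonpos_Ints_subset_Ints by auto
  have sin0: "sin (of_real pi * z) \<noteq> 0" using z by (subst sin_eq_0) auto
  let ?g = "\<lambda>z::complex. Digamma (1 - z) - Digamma z"
  let ?h = "\<lambda>z::complex. of_real pi * cos (of_real pi * z) / sin (of_real pi * z)"
  have d1: "(?g has_field_derivative (- Polygamma 1 (1 - z) - Polygamma 1 z)) (at z)"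
    using zn by (auto intro!: derivative_eq_intros)
  have d2: "(?h has_field_derivative
     (of_real pi * ((- sin (of_real pi * z) * of_real pi) * sin (of_real pi * z)
        - cos (of_real pi * z) * (cos (of_real pi * z) * of_real pi)) / (sin (of_real pi * z))\<^sup>2)) (at z)"
    using sin0 by (auto intro!: derivative_eq_intros simp: power2_eq_square algebra_simps)
  have ev: "eventually (\<lambda>t. t \<in> - \<int>) (nhds z)"
    using z by (intro eventually_nhds_in_open) (auto simp: open_Compl)
  have ev2: "eventually (\<lambda>t. ?g t = ?h t) (nhds z)"
    using ev by eventually_elim (auto intro: digamma_refl)
  have d3: "(?g has_field_derivative
     (of_real pi * ((- sin (of_real pi * z) * of_real pi) * sin (of_real pi * z)
        - cos (of_real pi * z) * (cos (of_real pi * z) * of_real pi)) / (sin (of_real pi * z))\<^sup>2)) (at z)"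
    by (subst DERIV_cong_ev[OF refl ev2 refl]) (rule d2)
  have sc: "sin (of_real pi * z) ^ 2 + cos (of_real pi * z) ^ 2 = 1" by (rule sin_cos_squared_add)
  have "of_real pi * ((- sin (of_real pi * z) * of_real pi) * sin (of_real pi * z)
        - cos (of_real pi * z) * (cos (of_real pi * z) * of_real pi)) = - (of_real pi ^ 2)"
    using sc by algebra
  then have "of_real pi * ((- sin (of_real pi * z) * of_real pi) * sin (of_real pi * z)
        - cos (of_real pi * z) * (cos (of_real pi * z) * of_real pi)) / (sin (of_real pi * z))\<^sup>2
      = - (of_real pi ^ 2 / sin (of_real pi * z) ^ 2)" by simp
  with DERIV_unique[OF d1 d3] have "- Polygamma 1 (1 - z) - Polygamma 1 z = - (of_real pi ^ 2 / sin (of_real pi * z) ^ 2)"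
    by simp
  then show ?thesis by (simp add: algebra_simps)
qed

lemma summable_norm_inv_prod:
  fixes c d :: complex
  shows "summable (\<lambda>n::nat. norm (1 / ((of_nat n + c) * (of_nat n + d))))"
proof -
  define N where "N = nat \<lceil>2 * (norm c + norm d)\<rceil> + 1"
  have sg: "summable (\<lambda>k::nat. 4 * inverse ((1 + of_nat k :: real) ^ 2))"
    using Polygamma_converges'[of "1::real" 2] by (intro summable_mult) simp_all
  have bnd: "norm (of_nat n + z) \<ge> (1 + real n) / 2" if "n \<ge> N" "norm z \<le> norm c + norm d" for n and z :: complex
  proof -
    have "real n \<ge> 2 * (norm c + norm d) + 1" using that(1) unfolding N_def by linarith
    moreover have "norm (of_nat n + z) \<ge> norm (of_nat n :: complex) - norm z"
      by (metis norm_diff_ineq)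
    ultimately show ?thesis using that(2) by simp
  qed
  show ?thesis
  proof (rule summable_comparison_test'[OF sg, of N])
    fix n :: nat assume n: "n \<ge> N"
    have b1: "norm (of_nat n + c) \<ge> (1 + real n) / 2" by (rule bnd[OF n]) simp
    have b2: "norm (of_nat n + d) \<ge> (1 + real n) / 2" by (rule bnd[OF n]) simp
    have pos: "(1 + real n) / 2 > 0" by simp
    have "(1 + real n) / 2 * ((1 + real n) / 2) \<le> norm (of_nat n + c) * norm (of_nat n + d)"
      using b1 b2 pos by (intro mult_mono) auto
    then have "inverse (norm (of_nat n + c) * norm (of_nat n + d)) \<le> inverse ((1 + real n) / 2 * ((1 + real n) / 2))"
      using pos by (intro le_imp_inverse_le) auto
    also have "\<dots> = 4 * inverse ((1 + real n) ^ 2)" by (simp add: power2_eq_square field_simps)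
    finally show "norm (norm (1 / ((of_nat n + c) * (of_nat n + d)))) \<le> 4 * inverse ((1 + of_nat n) ^ 2)"
      by (simp add: norm_mult norm_divide divide_inverse norm_inverse)
  qed
qed

lemma has_sum_nat_diff:
  fixes c d :: complex
  assumes c: "c \<notin> \<int>" and d: "d \<notin> \<int>"
  shows "((\<lambda>n::nat. 1 / (of_nat n + c) - 1 / (of_nat n + d)) has_sum (Digamma d - Digamma c)) UNIV"
proof -
  have c0: "c \<noteq> 0" and d0: "d \<noteq> 0" using c d by auto
  have nc: "of_nat n + c \<noteq> 0" for n :: nat
  proof
    assume "of_nat n + c = 0" then have "c = - of_nat n" by (simp add: eq_neg_iff_add_eq_0 add.commute)
    with c show False by auto
  qed
  have nd: "of_nat n + d \<noteq> 0" for n :: nat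
  proof
    assume "of_nat n + d = 0" then have "d = - of_nat n" by (simp add: eq_neg_iff_add_eq_0 add.commute)
    with d show False by auto
  qed
  have s: "(\<lambda>n. inverse (of_nat (Suc n)) - inverse (z + of_nat n)) sums (Digamma z + euler_mascheroni)"
    if "z \<noteq> 0" for z :: complex
    using summable_Digamma[OF that] by (simp add: Digamma_def summable_sums)
  have "(\<lambda>n. (inverse (of_nat (Suc n)) - inverse (d + of_nat n)) - (inverse (of_nat (Suc n)) - inverse (c + of_nat n)))
        sums ((Digamma d + euler_mascheroni) - (Digamma c + euler_mascheroni))"
    by (intro sums_diff s c0 d0)
  then have S: "(\<lambda>n::nat. 1 / (of_nat n + c) - 1 / (of_nat n + d)) sums (Digamma d - Digamma c)"
    by (simp add: divide_inverse add.commute)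
  have eq: "1 / (of_nat n + c) - 1 / (of_nat n + d) = (d - c) * (1 / ((of_nat n + c) * (of_nat n + d)))" for n :: nat
    using nc[of n] nd[of n] by (simp add: field_simps)
  have "summable (\<lambda>n::nat. norm (d - c) * norm (1 / ((of_nat n + c) * (of_nat n + d))))"
    by (intro summable_mult summable_norm_inv_prod)
  then have "summable (\<lambda>n::nat. norm (1 / (of_nat n + c) - 1 / (of_nat n + d)))"
    unfolding eq by (simp only: norm_mult)
  then show ?thesis using S by (rule norm_summable_imp_has_sum)
qed

lemma has_sum_nat_sq:
  fixes c :: complex
  assumes c: "c \<notin> \<int>"
  shows "((\<lambda>n::nat. 1 / (of_nat n + c) ^ 2) has_sum Polygamma 1 c) UNIV"
proof -
  have c0: "c \<noteq> 0" using c by auto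
  have S: "(\<lambda>n::nat. 1 / (of_nat n + c) ^ 2) sums Polygamma 1 c"
    using Polygamma_LIMSEQ[OF c0, of 1] by (simp add: divide_inverse add.commute power2_eq_square)
  have "summable (\<lambda>n::nat. norm (1 / ((of_nat n + c) * (of_nat n + c))))"
    by (rule summable_norm_inv_prod)
  then have "summable (\<lambda>n::nat. norm (1 / (of_nat n + c) ^ 2))"
    by (simp add: power2_eq_square)
  then show ?thesis using S by (rule norm_summable_imp_has_sum)
qed

lemma has_sum_int_split:
  fixes f :: "int \<Rightarrow> 'a :: {topological_comm_monoid_add}"
  assumes "((\<lambda>n::nat. f (int n)) has_sum A) UNIV"
      and "((\<lambda>n::nat. f (- int n - 1)) has_sum B) UNIV"
  shows "(f has_sum (A + B)) UNIV"
proof -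
  have "(f has_sum A) (range int)"
    using assms(1) by (subst has_sum_reindex) (simp_all add: o_def)
  moreover have "(f has_sum B) (range (\<lambda>n::nat. - int n - 1))"
    using assms(2) by (subst has_sum_reindex) (simp_all add: o_def inj_on_def)
  moreover have "range int \<inter> range (\<lambda>n::nat. - int n - 1) = {}" by auto
  ultimately have "(f has_sum (A + B)) (range int \<union> range (\<lambda>n::nat. - int n - 1))"
    by (intro has_sum_Un_disjoint)
  moreover have "range int \<union> range (\<lambda>n::nat. - int n - 1) = UNIV"
  proof -
    have "k \<in> range int \<union> range (\<lambda>n::nat. - int n - 1)" for k :: int
    proof (cases "k \<ge> 0")
      case True then show ?thesis by (auto intro: image_eqI[of _ _ "nat k"])
    next
      case False then show ?thesis by (auto intro!: image_eqI[of _ _ "nat (- k - 1)"])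
    qed
    then show ?thesis by blast
  qed
  ultimately show ?thesis by simp
qed

definition Ct :: "complex \<Rightarrow> complex" where
  "Ct z = of_real pi * cos (of_real pi * z) / sin (of_real pi * z)"

lemma has_sum_int_diff:
  fixes c d :: complex
  assumes c: "c \<notin> \<int>" and d: "d \<notin> \<int>"
  shows "((\<lambda>k::int. 1 / (of_int k + c) - 1 / (of_int k + d)) has_sum (Ct c - Ct d)) UNIV"
proof -
  have c1: "1 - c \<notin> \<int>" using c Ints_diff[of 1 "1 - c"] by auto
  have d1: "1 - d \<notin> \<int>" using d Ints_diff[of 1 "1 - d"] by auto
  have A: "((\<lambda>n::nat. 1 / (of_int (int n) + c) - 1 / (of_int (int n) + d)) has_sum (Digamma d - Digamma c)) UNIV"
    using has_sum_nat_diff[OF c d] by simp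
  have eqn: "1 / (of_int (- int n - 1) + c) - 1 / (of_int (- int n - 1) + d)
      = 1 / (of_nat n + (1 - d)) - 1 / (of_nat n + (1 - c))" for n :: nat
  proof -
    have h1: "of_int (- int n - 1) + c = - (of_nat n + (1 - c))" by simp
    have h2: "of_int (- int n - 1) + d = - (of_nat n + (1 - d))" by simp
    have e: "1 / (- of_nat n - 1 + x) = - (1 / (of_nat n + (1 - x)))" for x :: complex
    proof -
      have "- of_nat n - 1 + x = - (of_nat n + (1 - x))" by (simp add: algebra_simps)
      then show ?thesis by (simp only: divide_minus_right)
    qed
    show ?thesis by (simp add: e)
  qed
  have B: "((\<lambda>n::nat. 1 / (of_int (- int n - 1) + c) - 1 / (of_int (- int n - 1) + d)) has_sum (Digamma (1 - c) - Digamma (1 - d))) UNIV"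
    unfolding eqn by (rule has_sum_nat_diff[OF d1 c1])
  have "Digamma d - Digamma c + (Digamma (1 - c) - Digamma (1 - d)) = Ct c - Ct d"
    using digamma_refl[OF c] digamma_refl[OF d] unfolding Ct_def by (simp add: algebra_simps)
  then show ?thesis using has_sum_int_split[OF A B] by simp
qed

lemma has_sum_int_sq:
  fixes c :: complex
  assumes c: "c \<notin> \<int>"
  shows "((\<lambda>k::int. 1 / (of_int k + c) ^ 2) has_sum (of_real pi ^ 2 / sin (of_real pi * c) ^ 2)) UNIV"
proof -
  have c1: "1 - c \<notin> \<int>" using c Ints_diff[of 1 "1 - c"] by auto
  have A: "((\<lambda>n::nat. 1 / (of_int (int n) + c) ^ 2) has_sum Polygamma 1 c) UNIV"
    using has_sum_nat_sq[OF c] by simp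
  have eqn: "1 / (of_int (- int n - 1) + c) ^ 2 = 1 / (of_nat n + (1 - c)) ^ 2" for n :: nat
  proof -
    have h1: "of_int (- int n - 1) + c = - (of_nat n + (1 - c))" by simp
    show ?thesis by (simp add: power2_eq_square algebra_simps)
  qed
  have B: "((\<lambda>n::nat. 1 / (of_int (- int n - 1) + c) ^ 2) has_sum Polygamma 1 (1 - c)) UNIV"
    unfolding eqn by (rule has_sum_nat_sq[OF c1])
  show ?thesis using has_sum_int_split[OF A B] polygamma_refl[OF c] by simp
qed



definition Fh :: "real \<Rightarrow> int \<Rightarrow> real \<Rightarrow> complex" where
  "Fh T m X = (if m = 0 \<and> X = 0 then complex_of_real (1 / T)
     else (complex_of_real (exp (- X / T)) - 1) / (\<i> * complex_of_real (2 * pi * T * real_of_int m) - complex_of_real X))"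

lemma not_Ints_Im: "Im z \<noteq> 0 \<Longrightarrow> z \<notin> \<int>"
  by (auto elim!: Ints_cases)

lemma Ct_exp:
  assumes z: "z \<notin> \<int>"
  shows "Ct z = \<i> * of_real pi * (exp (2 * \<i> * of_real pi * z) + 1) / (exp (2 * \<i> * of_real pi * z) - 1)"
proof -
  define u where "u = exp (\<i> * (of_real pi * z))"
  have u0: "u \<noteq> 0" unfolding u_def by simp
  have sin0: "sin (of_real pi * z) \<noteq> 0" using z by (subst sin_eq_0) auto
  have em: "exp (- (\<i> * (of_real pi * z))) = 1 / u" unfolding u_def by (simp add: exp_minus field_simps)
  have e2: "exp (2 * \<i> * of_real pi * z) = u * u" unfolding u_def by (simp flip: exp_add) (simp add: algebra_simps)
  have s: "sin (of_real pi * z) = (u - 1 / u) / (2 * \<i>)" unfolding sin_exp_eq em u_def ..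
  have c: "cos (of_real pi * z) = (u + 1 / u) / 2" unfolding cos_exp_eq em u_def ..
  have uu: "u * u - 1 \<noteq> 0" using sin0 u0 unfolding s by (auto simp: field_simps)
  show ?thesis unfolding Ct_def e2 s c using u0 uu by (simp add: field_simps)
qed

lemma sinsq_exp:
  assumes z: "z \<notin> \<int>"
  shows "of_real pi ^ 2 / sin (of_real pi * z) ^ 2 = - 4 * of_real pi ^ 2 * exp (2 * \<i> * of_real pi * z) / (exp (2 * \<i> * of_real pi * z) - 1) ^ 2"
proof -
  define u where "u = exp (\<i> * (of_real pi * z))"
  have u0: "u \<noteq> 0" unfolding u_def by simp
  have sin0: "sin (of_real pi * z) \<noteq> 0" using z by (subst sin_eq_0) auto
  have em: "exp (- (\<i> * (of_real pi * z))) = 1 / u" unfolding u_def by (simp add: exp_minus field_simps)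
  have e2: "exp (2 * \<i> * of_real pi * z) = u * u" unfolding u_def by (simp flip: exp_add) (simp add: algebra_simps)
  have s: "sin (of_real pi * z) = (u - 1 / u) / (2 * \<i>)" unfolding sin_exp_eq em u_def ..
  have uu: "u * u - 1 \<noteq> 0" using sin0 u0 unfolding s by (auto simp: field_simps)
  show ?thesis unfolding e2 s using u0 uu by (simp add: field_simps power2_eq_square)
qed

lemma alg1:
  fixes A b P t D :: complex
  assumes "A \<noteq> 0" "A - 1 \<noteq> 0" "b - 1 \<noteq> 0" "P \<noteq> 0" "t \<noteq> 0" "D \<noteq> 0"
  shows "t * (1 / A - 1) * (b - 1) / (4 * P ^ 2 * t ^ 2) / D * (\<i> * P * (A + 1) / (A - 1) - \<i> * P * (b + 1) / (b - 1))
    = (1 / A * b - 1) / (2 * \<i> * P * t * D)"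
proof -
  have e: "(1 / A - 1) * (b - 1) * (\<i> * P * (A + 1) / (A - 1) - \<i> * P * (b + 1) / (b - 1)) = 2 * \<i> * P * (A - b) / A"
  proof -
    have hq: "(1 / A - 1) * ((A + 1) / (A - 1)) = - (A + 1) / A"
      using assms by (simp add: field_simps)
    have hr: "(b - 1) * ((b + 1) / (b - 1)) = b + 1"
      using assms by simp
    define q where "q = (A + 1) / (A - 1)"
    define r where "r = (b + 1) / (b - 1)"
    define u where "u = 1 / A - 1"
    have "(1 / A - 1) * (b - 1) * (\<i> * P * (A + 1) / (A - 1) - \<i> * P * (b + 1) / (b - 1))
       = u * (b - 1) * (\<i> * P * q - \<i> * P * r)" unfolding q_def r_def u_def by simp
    also have "\<dots> = \<i> * P * ((b - 1) * (u * q) - u * ((b - 1) * r))"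
      by (simp add: algebra_simps)
    finally have "(1 / A - 1) * (b - 1) * (\<i> * P * (A + 1) / (A - 1) - \<i> * P * (b + 1) / (b - 1))
       = \<i> * P * ((b - 1) * ((1 / A - 1) * ((A + 1) / (A - 1))) - (1 / A - 1) * ((b - 1) * ((b + 1) / (b - 1))))"
      unfolding q_def r_def u_def .
    also have "\<dots> = \<i> * P * ((b - 1) * (- (A + 1) / A) - (1 / A - 1) * (b + 1))"
      by (simp only: hq hr)
    also have "\<dots> = 2 * \<i> * P * (A - b) / A"
      using assms by (simp add: field_simps)
    finally show ?thesis .
  qed
  have "t * (1 / A - 1) * (b - 1) / (4 * P ^ 2 * t ^ 2) / D * (\<i> * P * (A + 1) / (A - 1) - \<i> * P * (b + 1) / (b - 1))
     = t / (4 * P ^ 2 * t ^ 2) / D * ((1 / A - 1) * (b - 1) * (\<i> * P * (A + 1) / (A - 1) - \<i> * P * (b + 1) / (b - 1)))"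
  proof -
    define w where "w = (\<i> * P * (A + 1) / (A - 1) - \<i> * P * (b + 1) / (b - 1))"
    define u where "u = 1 / A - 1"
    define z where "z = 4 * P ^ 2 * t ^ 2"
    have "t * u * (b - 1) / z / D * w = t / z / D * (u * (b - 1) * w)" by simp
    then show ?thesis unfolding w_def u_def z_def .
  qed
  also have "\<dots> = t / (4 * P ^ 2 * t ^ 2) / D * (2 * \<i> * P * (A - b) / A)" by (simp only: e)
  also have "\<dots> = (1 / A * b - 1) / (2 * \<i> * P * t * D)"
    using assms by (simp add: field_simps power2_eq_square)
  finally show ?thesis .
qed

lemma alg2:
  fixes A P t :: complex
  assumes "A \<noteq> 0" "A - 1 \<noteq> 0" "P \<noteq> 0" "t \<noteq> 0"
  shows "t * (1 / A - 1) * (A - 1) / (4 * P ^ 2 * t ^ 2) * (- 4 * P ^ 2 * A / (A - 1) ^ 2) = 1 / t"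
  using assms by (simp add: field_simps) (simp add: algebra_simps power2_eq_square)

lemma Fh_zero: "m \<noteq> 0 \<Longrightarrow> Fh T m 0 = 0"
  by (simp add: Fh_def)

lemma key_sum:
  fixes T X Y :: real and m :: int
  assumes T: "T > 0" and Y: "Y \<noteq> 0"
  shows "((\<lambda>k::int. of_real T * Fh T (m - k) X * Fh T k Y) has_sum Fh T m (X + Y)) UNIV"
proof (cases "X = 0")
  case True
  show ?thesis
  proof (rule has_sum_finite_neutralI[of "{m}"])
    show "of_real T * Fh T (m - k) X * Fh T k Y = 0" if "k \<in> UNIV - {m}" for k
      using that True by (simp add: Fh_zero)
    show "Fh T m (X + Y) = (\<Sum>k\<in>{m}. of_real T * Fh T (m - k) X * Fh T k Y)"
      using True T by (simp add: Fh_def)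
  qed auto
next
  case X: False
  define a where "a = exp (- X / T)"
  define b where "b = exp (- Y / T)"
  define A where "A = exp (X / T)"
  have aA: "a * A = 1" unfolding a_def A_def by (simp flip: exp_add)
  have a1: "a \<noteq> 1" using X T unfolding a_def by simp
  have b1: "b \<noteq> 1" using Y T unfolding b_def by simp
  have A1: "A \<noteq> 1" using X T unfolding A_def by simp
  have A0: "A \<noteq> 0" unfolding A_def by simp
  define c where "c = - of_int m - \<i> * complex_of_real (X / (2 * pi * T))"
  define d where "d = \<i> * complex_of_real (Y / (2 * pi * T))"
  have cI: "c \<notin> \<int>" using X T unfolding c_def by (intro not_Ints_Im) simp
  have dI: "d \<notin> \<int>" using Y T unfolding d_def by (intro not_Ints_Im) simp
  have kc: "of_int k + c \<noteq> 0" for k :: int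
  proof
    assume "of_int k + c = 0" then have "c = - of_int k" by (simp add: eq_neg_iff_add_eq_0 add.commute)
    with cI show False by auto
  qed
  have kd: "of_int k + d \<noteq> 0" for k :: int
  proof
    assume "of_int k + d = 0" then have "d = - of_int k" by (simp add: eq_neg_iff_add_eq_0 add.commute)
    with dI show False by auto
  qed
  have pT: "complex_of_real pi * complex_of_real T \<noteq> 0" using T by simp
  have den1: "\<i> * complex_of_real (2 * pi * T * real_of_int (m - k)) - complex_of_real X
      = - 2 * \<i> * of_real pi * of_real T * (of_int k + c)" for k :: int
    unfolding c_def using T by (simp add: field_simps)
  have den2: "\<i> * complex_of_real (2 * pi * T * real_of_int k) - complex_of_real Y
      = 2 * \<i> * of_real pi * of_real T * (of_int k + d)" for k :: int
    unfolding d_def using T by (simp add: field_simps)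
  define K0 where "K0 = complex_of_real T * (of_real a - 1) * (of_real b - 1) / (4 * of_real pi ^ 2 * of_real T ^ 2)"
  have trm: "of_real T * Fh T (m - k) X * Fh T k Y = K0 * (1 / ((of_int k + c) * (of_int k + d)))" for k :: int
  proof -
    have "of_real T * Fh T (m - k) X * Fh T k Y
       = of_real T * ((of_real a - 1) / (- 2 * \<i> * of_real pi * of_real T * (of_int k + c)))
           * ((of_real b - 1) / (2 * \<i> * of_real pi * of_real T * (of_int k + d)))"
      unfolding Fh_def den1 den2 a_def b_def using X Y by simp
    also have "\<dots> = K0 * (1 / ((of_int k + c) * (of_int k + d)))"
      unfolding K0_def using kc[of k] kd[of k] pT by (simp add: field_simps power2_eq_square)
    finally show ?thesis .
  qed
  have ec: "exp (2 * \<i> * of_real pi * c) = of_real A"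
  proof -
    have "2 * \<i> * of_real pi * c = (2 * of_int (- m) * of_real pi) * \<i> + of_real (X / T)"
      unfolding c_def using T by (simp add: field_simps)
    then have "exp (2 * \<i> * of_real pi * c) = exp ((2 * of_int (- m) * of_real pi) * \<i>) * exp (of_real (X / T))"
      by (simp only: exp_add)
    also have "exp ((2 * of_int (- m) * of_real pi) * \<i>) = 1"
      using exp_integer_2pi[of "real_of_int (- m)"] by simp
    finally show ?thesis unfolding A_def by (simp only: exp_of_real mult_1_left)
  qed
  have ed: "exp (2 * \<i> * of_real pi * d) = of_real b"
  proof -
    have "2 * \<i> * of_real pi * d = of_real (- Y / T)"
      unfolding d_def using T by (simp add: field_simps)
    then show ?thesis unfolding b_def by (metis exp_of_real)
  qed
  show ?thesis
  proof (cases "c = d")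
    case False
    have trm2: "of_real T * Fh T (m - k) X * Fh T k Y = (K0 / (d - c)) * (1 / (of_int k + c) - 1 / (of_int k + d))" for k :: int
    proof -
      have "d - c \<noteq> 0" using False by simp
      moreover have e: "1 / (of_int k + c) - 1 / (of_int k + d) = (d - c) * (1 / ((of_int k + c) * (of_int k + d)))"
        using kc[of k] kd[of k] by (simp add: field_simps)
      ultimately show ?thesis unfolding trm e by simp
    qed
    have hs: "((\<lambda>k::int. of_real T * Fh T (m - k) X * Fh T k Y) has_sum (K0 / (d - c)) * (Ct c - Ct d)) UNIV"
      unfolding trm2 by (intro has_sum_cmult_right has_sum_int_diff cI dI)
    have nd: "\<not> (m = 0 \<and> X + Y = 0)"
    proof
      assume "m = 0 \<and> X + Y = 0"
      then have "Y = - X" "m = 0" by auto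
      then have "c = d" unfolding c_def d_def by simp
      with False show False by simp
    qed
    have dc: "d - c = of_int m + \<i> * of_real ((X + Y) / (2 * pi * T))"
      unfolding c_def d_def using T by (simp add: field_simps)
    have den3: "\<i> * complex_of_real (2 * pi * T * real_of_int m) - complex_of_real (X + Y)
        = 2 * \<i> * of_real pi * of_real T * (d - c)"
      unfolding dc using T by (simp add: field_simps)
    have dc0: "d - c \<noteq> 0" using False by simp
    have ab: "exp (- (X + Y) / T) = a * b" unfolding a_def b_def by (simp add: exp_add[symmetric] diff_divide_distrib add_divide_distrib)
    have "(K0 / (d - c)) * (Ct c - Ct d) = Fh T m (X + Y)"
    proof -
      have e1: "Fh T m (X + Y) = (of_real a * of_real b - 1) / (2 * \<i> * of_real pi * of_real T * (d - c))"
        unfolding Fh_def den3 ab using nd by auto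
      have e2: "Ct c = \<i> * of_real pi * (of_real A + 1) / (of_real A - 1)"
        using Ct_exp[OF cI] ec by simp
      have e3: "Ct d = \<i> * of_real pi * (of_real b + 1) / (of_real b - 1)"
        using Ct_exp[OF dI] ed by simp
      have e4: "complex_of_real a = 1 / of_real A" using aA A0 by (simp add: field_simps flip: of_real_mult)
      have nz: "complex_of_real A - 1 \<noteq> 0" "complex_of_real b - 1 \<noteq> 0" "complex_of_real A \<noteq> 0"
        using A1 b1 A0 by simp_all
      show ?thesis unfolding K0_def e1 e2 e3 e4 using dc0 T nz by (intro alg1) simp_all
    qed
    then show ?thesis using hs by simp
  next
    case True
    then have m0: "m = 0" and XY: "Y = - X" unfolding c_def d_def using T
      by (auto simp: complex_eq_iff field_simps)
    have trm2: "of_real T * Fh T (m - k) X * Fh T k Y = K0 * (1 / (of_int k + c) ^ 2)" for k :: int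
      unfolding trm True by (simp add: power2_eq_square)
    have hs: "((\<lambda>k::int. of_real T * Fh T (m - k) X * Fh T k Y) has_sum K0 * (of_real pi ^ 2 / sin (of_real pi * c) ^ 2)) UNIV"
      unfolding trm2 by (intro has_sum_cmult_right has_sum_int_sq cI)
    have bA: "b = A" unfolding b_def A_def XY by simp
    have "K0 * (of_real pi ^ 2 / sin (of_real pi * c) ^ 2) = Fh T m (X + Y)"
    proof -
      have e1: "Fh T m (X + Y) = 1 / of_real T" unfolding Fh_def using m0 XY by simp
      have e2: "of_real pi ^ 2 / sin (of_real pi * c) ^ 2 = - 4 * of_real pi ^ 2 * of_real A / (of_real A - 1) ^ 2"
        using sinsq_exp[OF cI] ec by simp
      have e4: "complex_of_real a = 1 / of_real A" using aA A0 by (simp add: field_simps flip: of_real_mult)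
      have nz: "complex_of_real A - 1 \<noteq> 0" "complex_of_real A \<noteq> 0"
        using A1 A0 by simp_all
      show ?thesis unfolding K0_def bA e1 e2 e4 using T nz by (intro alg2) simp_all
    qed
    then show ?thesis using hs by simp
  qed
qed



lemma has_sum_finsum:
  fixes f :: "'i \<Rightarrow> 'a \<Rightarrow> 'b::topological_comm_monoid_add"
  assumes "finite F" "\<And>i. i \<in> F \<Longrightarrow> (f i has_sum s i) A"
  shows "((\<lambda>x. \<Sum>i\<in>F. f i x) has_sum (\<Sum>i\<in>F. s i)) A"
  using assms
proof (induction F rule: finite_induct)
  case empty then show ?case by simp
next
  case (insert i F)
  then show ?case by (simp add: has_sum_add)
qed

definition Dl :: "real \<Rightarrow> real \<Rightarrow> int \<Rightarrow> real" where
  "Dl T E k = 2 * E / ((2 * pi * T * real_of_int k)\<^sup>2 + E\<^sup>2)"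

definition Qs :: "nat \<Rightarrow> int \<Rightarrow> (nat \<Rightarrow> int) set" where
  "Qs I m = {n \<in> {..<I} \<rightarrow>\<^sub>E (UNIV :: int set). (\<Sum>j<I. n j) = m}"

definition wt :: "(nat \<Rightarrow> 'a::comm_ring_1) \<Rightarrow> nat set \<Rightarrow> nat set \<Rightarrow> 'a" where
  "wt c A S = (\<Prod>j\<in>A. if j \<in> S then c j else 1 + c j)"

definition Xs :: "(nat \<Rightarrow> real) \<Rightarrow> nat \<Rightarrow> nat set \<Rightarrow> real" where
  "Xs E I S = (\<Sum>j<I. if j \<in> S then - E j else E j)"

definition Form :: "real \<Rightarrow> (nat \<Rightarrow> real) \<Rightarrow> nat \<Rightarrow> int \<Rightarrow> complex" where
  "Form T E I m = (\<Sum>S\<in>Pow {..<I}. of_real (wt (\<lambda>j. bose T (E j)) {..<I} S) * Fh T m (Xs E I S))"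

lemma sum_Pow_insert:
  assumes "finite A" "x \<notin> A"
  shows "(\<Sum>S\<in>Pow (insert x A). g S) = (\<Sum>S\<in>Pow A. g S) + (\<Sum>S\<in>Pow A. g (insert x S))"
proof -
  have inj: "inj_on (insert x) (Pow A)"
    using assms(2) by (auto simp: inj_on_def)
  have "(\<Sum>S\<in>Pow (insert x A). g S) = (\<Sum>S\<in>Pow A \<union> insert x ` Pow A. g S)"
    by (simp add: Pow_insert)
  also have "\<dots> = (\<Sum>S\<in>Pow A. g S) + (\<Sum>S\<in>insert x ` Pow A. g S)"
    using assms by (intro sum.union_disjoint) auto
  also have "(\<Sum>S\<in>insert x ` Pow A. g S) = (\<Sum>S\<in>Pow A. g (insert x S))"
    using inj by (simp add: sum.reindex)
  finally show ?thesis .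
qed

lemma wt_insert:
  assumes "finite A" "x \<notin> A"
  shows "wt c (insert x A) S = (if x \<in> S then c x else 1 + c x) * wt c A S"
  using assms by (simp add: wt_def)

lemma wt_insert_set:
  assumes "x \<notin> A"
  shows "wt c A (insert x S) = wt c A S"
  unfolding wt_def using assms by (intro prod.cong) auto

lemma Xs_Suc: "Xs E (Suc I) S = Xs E I S + (if I \<in> S then - E I else E I)"
  by (simp add: Xs_def)

lemma Xs_insert: "Xs E I (insert I S) = Xs E I S"
  unfolding Xs_def by (intro sum.cong) auto

lemma Form_Suc:
  "Form T E (Suc I) m = (\<Sum>S\<in>Pow {..<I}. of_real (wt (\<lambda>j. bose T (E j)) {..<I} S) *
      (of_real (1 + bose T (E I)) * Fh T m (Xs E I S + E I) + of_real (bose T (E I)) * Fh T m (Xs E I S + - E I)))"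
proof -
  have A: "{..<Suc I} = insert I {..<I}" by auto
  have "Form T E (Suc I) m = (\<Sum>S\<in>Pow (insert I {..<I}). of_real (wt (\<lambda>j. bose T (E j)) (insert I {..<I}) S) * Fh T m (Xs E (Suc I) S))"
    unfolding Form_def A ..
  also have "\<dots> = (\<Sum>S\<in>Pow {..<I}. of_real (wt (\<lambda>j. bose T (E j)) (insert I {..<I}) S) * Fh T m (Xs E (Suc I) S))
     + (\<Sum>S\<in>Pow {..<I}. of_real (wt (\<lambda>j. bose T (E j)) (insert I {..<I}) (insert I S)) * Fh T m (Xs E (Suc I) (insert I S)))"
    by (rule sum_Pow_insert) auto
  also have "(\<Sum>S\<in>Pow {..<I}. of_real (wt (\<lambda>j. bose T (E j)) (insert I {..<I}) S) * Fh T m (Xs E (Suc I) S))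
     = (\<Sum>S\<in>Pow {..<I}. of_real (wt (\<lambda>j. bose T (E j)) {..<I} S) * (of_real (1 + bose T (E I)) * Fh T m (Xs E I S + E I)))"
  proof (rule sum.cong[OF refl])
    fix S assume "S \<in> Pow {..<I}"
    then have "I \<notin> S" by auto
    then show "of_real (wt (\<lambda>j. bose T (E j)) (insert I {..<I}) S) * Fh T m (Xs E (Suc I) S)
       = of_real (wt (\<lambda>j. bose T (E j)) {..<I} S) * (of_real (1 + bose T (E I)) * Fh T m (Xs E I S + E I))"
      by (simp add: wt_insert Xs_Suc)
  qed
  also have "(\<Sum>S\<in>Pow {..<I}. of_real (wt (\<lambda>j. bose T (E j)) (insert I {..<I}) (insert I S)) * Fh T m (Xs E (Suc I) (insert I S)))
     = (\<Sum>S\<in>Pow {..<I}. of_real (wt (\<lambda>j. bose T (E j)) {..<I} S) * (of_real (bose T (E I)) * Fh T m (Xs E I S + - E I)))"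
  proof (rule sum.cong[OF refl])
    fix S assume "S \<in> Pow {..<I}"
    show "of_real (wt (\<lambda>j. bose T (E j)) (insert I {..<I}) (insert I S)) * Fh T m (Xs E (Suc I) (insert I S))
       = of_real (wt (\<lambda>j. bose T (E j)) {..<I} S) * (of_real (bose T (E I)) * Fh T m (Xs E I S + - E I))"
      by (simp add: wt_insert Xs_Suc Xs_insert wt_insert_set)
  qed
  finally show ?thesis by (simp add: sum.distrib[symmetric] algebra_simps)
qed

lemma Dl_Fh:
  assumes T: "T > 0" and E: "E > 0"
  shows "complex_of_real (Dl T E k) = of_real (1 + bose T E) * Fh T k E + of_real (bose T E) * Fh T k (- E)"
proof -
  define e where "e = exp (E / T)"
  have e1: "e \<noteq> 1" using T E unfolding e_def by simp
  have e0: "e > 0" unfolding e_def by simp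
  have em: "exp (- E / T) = 1 / e" unfolding e_def by (simp add: exp_minus inverse_eq_divide)
  have b: "bose T E = 1 / (e - 1)" unfolding bose_def e_def ..
  define w where "w = complex_of_real (2 * pi * T * real_of_int k)"
  have d1: "\<i> * w - of_real E \<noteq> 0" using E by (auto simp: complex_eq_iff w_def)
  have d2: "\<i> * w + of_real E \<noteq> 0" using E by (auto simp: complex_eq_iff w_def)
  have c1: "complex_of_real (1 + bose T E) * (of_real (exp (- E / T)) - 1) = -1"
    unfolding b em using e1 e0 by (simp add: field_simps)
  have c2: "complex_of_real (bose T E) * (of_real (exp (- (- E) / T)) - 1) = 1"
    unfolding b using e1 e0 by (simp add: e_def[symmetric] field_simps)
  have "of_real (1 + bose T E) * Fh T k E + of_real (bose T E) * Fh T k (- E)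
      = of_real (1 + bose T E) * (of_real (exp (- E / T)) - 1) / (\<i> * w - of_real E)
        + of_real (bose T E) * (of_real (exp (- (- E) / T)) - 1) / (\<i> * w + of_real E)"
    unfolding Fh_def w_def using E by simp
  also have "\<dots> = - 1 / (\<i> * w - of_real E) + 1 / (\<i> * w + of_real E)"
    by (simp only: c1 c2)
  also have "\<dots> = of_real (2 * E) / (w ^ 2 + of_real E ^ 2)"
  proof -
    have "w * w + of_real E * of_real E = of_real ((2 * pi * T * real_of_int k)\<^sup>2 + E\<^sup>2)"
      unfolding w_def by (simp add: power2_eq_square)
    moreover have "(2 * pi * T * real_of_int k)\<^sup>2 + E\<^sup>2 > 0" using E by (intro add_nonneg_pos) auto
    ultimately have d3: "w * w + of_real E * of_real E \<noteq> 0" by (metis of_real_eq_0_iff less_irrefl)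
    have d4: "- (w * w) - of_real E * of_real E \<noteq> 0" using d3 by (metis add_uminus_conv_diff minus_add_distrib neg_equal_0_iff_equal)
    show ?thesis using d1 d2 d3 d4 by (simp add: field_simps power2_eq_square)
  qed
  also have "\<dots> = complex_of_real (Dl T E k)"
    unfolding Dl_def w_def by simp
  finally show ?thesis by simp
qed

lemma Dl_nonneg: "x > 0 \<Longrightarrow> Dl T x k \<ge> 0"
  unfolding Dl_def by (intro divide_nonneg_nonneg) auto

lemma main_M:
  assumes T: "T > 0"
  shows "(\<forall>j<I. E j > 0) \<Longrightarrow>
    ((\<lambda>n. T ^ I * (\<Prod>j<I. Dl T (E j) (n j))) has_sum (T * Re (Form T E I m))) (Qs I m)
    \<and> Form T E I m = of_real (Re (Form T E I m))"
proof (induction I arbitrary: m)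
  case 0
  have Q: "Qs 0 m = (if m = 0 then {\<lambda>_. undefined} else {})" by (auto simp: Qs_def)
  have F: "Form T E 0 m = (if m = 0 then of_real (1 / T) else 0)" by (simp add: Form_def wt_def Xs_def Fh_def)
  show ?case unfolding Q F using T by (cases "m = 0") (simp_all add: has_sum_finiteI)
next
  case (Suc I)
  have EI: "E I > 0" and E': "\<forall>j<I. E j > 0" using Suc.prems by auto
  note IH = Suc.IH[OF E']
  define f where "f = (\<lambda>(k::int, n'::nat \<Rightarrow> int). (T * Dl T (E I) k) * (T ^ I * (\<Prod>j<I. Dl T (E j) (n' j))))"
  define g where "g = (\<lambda>k::int. (T * Dl T (E I) k) * (T * Re (Form T E I (m - k))))"
  have inner: "((\<lambda>n'. f (k, n')) has_sum g k) (Qs I (m - k))" for k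
    using has_sum_cmult_right[OF conjunct1[OF IH[of "m - k"]], of "T * Dl T (E I) k"] by (simp add: f_def g_def)
  have outer_c: "((\<lambda>k. complex_of_real (g k)) has_sum (of_real T * Form T E (Suc I) m)) UNIV"
  proof -
    have eq: "complex_of_real (g k) = of_real T * (\<Sum>S\<in>Pow {..<I}. of_real (wt (\<lambda>j. bose T (E j)) {..<I} S) *
      (of_real (1 + bose T (E I)) * (of_real T * Fh T (m - k) (Xs E I S) * Fh T k (E I))
       + of_real (bose T (E I)) * (of_real T * Fh T (m - k) (Xs E I S) * Fh T k (- E I))))" for k
    proof -
      have r: "complex_of_real (Re (Form T E I (m - k))) = Form T E I (m - k)"
        using conjunct2[OF IH[of "m - k"]] by simp
      have "complex_of_real (g k) = of_real T * (of_real T * Form T E I (m - k)) * of_real (Dl T (E I) k)"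
        unfolding g_def of_real_mult r by (simp add: algebra_simps)
      also have "\<dots> = of_real T * (\<Sum>S\<in>Pow {..<I}. of_real (wt (\<lambda>j. bose T (E j)) {..<I} S) *
         (of_real T * Fh T (m - k) (Xs E I S) * of_real (Dl T (E I) k)))"
        unfolding Form_def by (simp add: sum_distrib_left sum_distrib_right algebra_simps)
      also have "\<dots> = of_real T * (\<Sum>S\<in>Pow {..<I}. of_real (wt (\<lambda>j. bose T (E j)) {..<I} S) *
      (of_real (1 + bose T (E I)) * (of_real T * Fh T (m - k) (Xs E I S) * Fh T k (E I))
       + of_real (bose T (E I)) * (of_real T * Fh T (m - k) (Xs E I S) * Fh T k (- E I))))"
        unfolding Dl_Fh[OF T EI] by (simp add: algebra_simps)
      finally show ?thesis .
    qed
    have EI0: "E I \<noteq> 0" "- E I \<noteq> 0" using EI by auto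
    have "((\<lambda>k. of_real T * (\<Sum>S\<in>Pow {..<I}. of_real (wt (\<lambda>j. bose T (E j)) {..<I} S) *
      (of_real (1 + bose T (E I)) * (of_real T * Fh T (m - k) (Xs E I S) * Fh T k (E I))
       + of_real (bose T (E I)) * (of_real T * Fh T (m - k) (Xs E I S) * Fh T k (- E I)))))
      has_sum (of_real T * (\<Sum>S\<in>Pow {..<I}. of_real (wt (\<lambda>j. bose T (E j)) {..<I} S) *
      (of_real (1 + bose T (E I)) * Fh T m (Xs E I S + E I) + of_real (bose T (E I)) * Fh T m (Xs E I S + - E I))))) UNIV"
      by (intro has_sum_cmult_right has_sum_finsum has_sum_add key_sum T EI0) simp
    then show ?thesis unfolding eq Form_Suc .
  qed
  have outer: "(g has_sum (T * Re (Form T E (Suc I) m))) UNIV"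
    using has_sum_Re[OF outer_c] by simp
  have real: "Form T E (Suc I) m = of_real (Re (Form T E (Suc I) m))"
  proof -
    have "((\<lambda>k. complex_of_real (g k)) has_sum of_real (T * Re (Form T E (Suc I) m))) UNIV"
      using outer by (simp only: has_sum_of_real_iff)
    from has_sum_unique[OF outer_c this] have "of_real T * Form T E (Suc I) m = of_real T * of_real (Re (Form T E (Suc I) m))"
      by simp
    then show ?thesis using T by simp
  qed
  have fnn: "f (k, n') \<ge> 0" for k n'
    unfolding f_def using T EI E' by (auto intro!: mult_nonneg_nonneg prod_nonneg Dl_nonneg)
  have sig: "(f has_sum (T * Re (Form T E (Suc I) m))) (Sigma UNIV (\<lambda>k. Qs I (m - k)))"
    using inner outer
    by (rule has_sum_SigmaI) (rule summable_on_SigmaI[OF inner has_sum_imp_summable[OF outer] fnn])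
  have bij: "((\<lambda>n. T ^ Suc I * (\<Prod>j<Suc I. Dl T (E j) (n j))) has_sum (T * Re (Form T E (Suc I) m))) (Qs (Suc I) m)
     = (f has_sum (T * Re (Form T E (Suc I) m))) (Sigma UNIV (\<lambda>k. Qs I (m - k)))"
  proof (rule has_sum_reindex_bij_witness[where j = "\<lambda>n. (n I, n(I := undefined))" and i = "\<lambda>(k, n'). n'(I := k)"])
    fix a assume a: "a \<in> Qs (Suc I) m"
    show "(case (a I, a(I := undefined)) of (k, n') \<Rightarrow> n'(I := k)) = a" by simp
    have ext: "a x = undefined" if "x \<ge> Suc I" for x using a that by (auto simp: Qs_def PiE_iff extensional_def)
    have sm: "(\<Sum>j<I. a j) = m - a I" using a by (auto simp: Qs_def)
    have sm2: "(\<Sum>j<I. (a(I := undefined)) j) = (\<Sum>j<I. a j)" by (intro sum.cong) auto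
    show "(a I, a(I := undefined)) \<in> Sigma UNIV (\<lambda>k. Qs I (m - k))"
      using ext sm sm2 by (auto simp: Qs_def PiE_iff extensional_def)
    have pr: "(\<Prod>j<I. Dl T (E j) ((a(I := undefined)) j)) = (\<Prod>j<I. Dl T (E j) (a j))" by (intro prod.cong) auto
    show "f (a I, a(I := undefined)) = T ^ Suc I * (\<Prod>j<Suc I. Dl T (E j) (a j))"
      unfolding f_def using pr by (simp add: algebra_simps)
  next
    fix b assume b: "b \<in> Sigma UNIV (\<lambda>k. Qs I (m - k))"
    obtain k n' where bk: "b = (k, n')" by (cases b)
    with b have n': "n' \<in> Qs I (m - k)" by auto
    have ext: "n' x = undefined" if "x \<ge> I" for x using n' that by (auto simp: Qs_def PiE_iff extensional_def)
    show "(\<lambda>n. (n I, n(I := undefined))) (case b of (k, n') \<Rightarrow> n'(I := k)) = b"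
      using ext by (auto simp: bk fun_eq_iff)
    have sm: "(\<Sum>j<I. n' j) = m - k" using n' by (auto simp: Qs_def)
    have sm2: "(\<Sum>j<I. (n'(I := k)) j) = (\<Sum>j<I. n' j)" by (intro sum.cong) auto
    show "(case b of (k, n') \<Rightarrow> n'(I := k)) \<in> Qs (Suc I) m"
      using ext sm sm2 by (auto simp: bk Qs_def PiE_iff extensional_def)
  qed simp
  show ?case using sig bij real by simp
qed



definition flip :: "nat set \<Rightarrow> (nat \<Rightarrow> real) \<Rightarrow> nat \<Rightarrow> real" where
  "flip S E' = (\<lambda>j. if j \<in> S then - E' j else E' j)"

lemma flip_upd: "x \<notin> S \<Longrightarrow> flip S (E'(x := - E' x)) = flip (insert x S) E'"
  by (auto simp: fun_eq_iff flip_def)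

lemma flip_empty: "flip {} E' = E'"
  by (simp add: fun_eq_iff flip_def)

lemma foldr_one_plus_c_S:
  assumes "distinct xs"
  shows "foldr (\<lambda>j. one_plus_c_S (c j) j) xs f E' = (\<Sum>S\<in>Pow (set xs). wt c (set xs) S * f (flip S E'))"
  using assms
proof (induction xs arbitrary: E')
  case Nil
  then show ?case by (simp add: wt_def flip_empty)
next
  case (Cons x xs)
  have x: "x \<notin> set xs" and d: "distinct xs" using Cons.prems by auto
  let ?G = "foldr (\<lambda>j. one_plus_c_S (c j) j) xs f"
  have G1: "?G E' = (\<Sum>S\<in>Pow (set xs). wt c (set xs) S * f (flip S E'))" using Cons.IH[OF d] .
  have G2: "?G (E'(x := - E' x)) = (\<Sum>S\<in>Pow (set xs). wt c (set xs) S * f (flip (insert x S) E'))"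
  proof -
    have "?G (E'(x := - E' x)) = (\<Sum>S\<in>Pow (set xs). wt c (set xs) S * f (flip S (E'(x := - E' x))))" by (rule Cons.IH[OF d])
    also have "\<dots> = (\<Sum>S\<in>Pow (set xs). wt c (set xs) S * f (flip (insert x S) E'))"
    proof -
      have hf: "f (flip S (E'(x := - E' x))) = f (flip (insert x S) E')" if "S \<in> Pow (set xs)" for S
      proof -
        have xS: "x \<notin> S" using that x by auto
        show ?thesis by (simp only: flip_upd[OF xS])
      qed
      show ?thesis by (intro sum.cong refl) (simp only: hf)
    qed
    finally show ?thesis .
  qed
  have "foldr (\<lambda>j. one_plus_c_S (c j) j) (x # xs) f E' = ?G E' + c x * (?G E' + ?G (E'(x := - E' x)))"
    by (simp add: one_plus_c_S_def c_one_plus_S_def one_plus_S_def refl_op_def)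
  also have "\<dots> = (\<Sum>S\<in>Pow (set xs). (1 + c x) * wt c (set xs) S * f (flip S E'))
      + (\<Sum>S\<in>Pow (set xs). c x * wt c (set xs) S * f (flip (insert x S) E'))"
    unfolding G1 G2 by (simp add: algebra_simps sum_distrib_left sum.distrib)
  also have "\<dots> = (\<Sum>S\<in>Pow (set (x # xs)). wt c (set (x # xs)) S * f (flip S E'))"
  proof -
    have "(\<Sum>S\<in>Pow (set (x # xs)). wt c (set (x # xs)) S * f (flip S E'))
      = (\<Sum>S\<in>Pow (set xs). wt c (insert x (set xs)) S * f (flip S E'))
        + (\<Sum>S\<in>Pow (set xs). wt c (insert x (set xs)) (insert x S) * f (flip (insert x S) E'))"
      using x by (simp add: sum_Pow_insert)
    also have "(\<Sum>S\<in>Pow (set xs). wt c (insert x (set xs)) S * f (flip S E'))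
       = (\<Sum>S\<in>Pow (set xs). (1 + c x) * wt c (set xs) S * f (flip S E'))"
      using x by (intro sum.cong refl) (auto simp: wt_insert)
    also have "(\<Sum>S\<in>Pow (set xs). wt c (insert x (set xs)) (insert x S) * f (flip (insert x S) E'))
       = (\<Sum>S\<in>Pow (set xs). c x * wt c (set xs) S * f (flip (insert x S) E'))"
      using x by (intro sum.cong refl) (auto simp: wt_insert wt_insert_set)
    finally show ?thesis by simp
  qed
  finally show ?case .
qed

lemma foldr_c_one_plus_S:
  assumes "distinct xs"
  shows "foldr (\<lambda>j. c_one_plus_S (c j) j) xs f E' = (\<Prod>j\<in>set xs. c j) * (\<Sum>S\<in>Pow (set xs). f (flip S E'))"
  using assms
proof (induction xs arbitrary: E')
  case Nil
  then show ?case by (simp add: flip_empty)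
next
  case (Cons x xs)
  have x: "x \<notin> set xs" and d: "distinct xs" using Cons.prems by auto
  let ?G = "foldr (\<lambda>j. c_one_plus_S (c j) j) xs f"
  have G1: "?G E' = (\<Prod>j\<in>set xs. c j) * (\<Sum>S\<in>Pow (set xs). f (flip S E'))" using Cons.IH[OF d] .
  have G2: "?G (E'(x := - E' x)) = (\<Prod>j\<in>set xs. c j) * (\<Sum>S\<in>Pow (set xs). f (flip (insert x S) E'))"
  proof -
    have "?G (E'(x := - E' x)) = (\<Prod>j\<in>set xs. c j) * (\<Sum>S\<in>Pow (set xs). f (flip S (E'(x := - E' x))))" by (rule Cons.IH[OF d])
    also have "\<dots> = (\<Prod>j\<in>set xs. c j) * (\<Sum>S\<in>Pow (set xs). f (flip (insert x S) E'))"
    proof -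
      have hf: "f (flip S (E'(x := - E' x))) = f (flip (insert x S) E')" if "S \<in> Pow (set xs)" for S
      proof -
        have xS: "x \<notin> S" using that x by auto
        show ?thesis by (simp only: flip_upd[OF xS])
      qed
      show ?thesis by (intro arg_cong[where f="\<lambda>v. _ * v"] sum.cong refl) (simp only: hf)
    qed
    finally show ?thesis .
  qed
  have "foldr (\<lambda>j. c_one_plus_S (c j) j) (x # xs) f E' = c x * (?G E' + ?G (E'(x := - E' x)))"
    by (simp add: c_one_plus_S_def one_plus_S_def refl_op_def)
  also have "\<dots> = (\<Prod>j\<in>set (x # xs). c j) * (\<Sum>S\<in>Pow (set (x # xs)). f (flip S E'))"
    unfolding G1 G2 using x by (simp add: sum_Pow_insert algebra_simps)
  finally show ?case .
qed

lemma foldr_one_plus_S: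
  assumes "distinct xs"
  shows "foldr one_plus_S xs f E' = (\<Sum>S\<in>Pow (set xs). f (flip S E'))"
  using assms
proof (induction xs arbitrary: E')
  case Nil
  then show ?case by (simp add: flip_empty)
next
  case (Cons x xs)
  have x: "x \<notin> set xs" and d: "distinct xs" using Cons.prems by auto
  let ?G = "foldr one_plus_S xs f"
  have G1: "?G E' = (\<Sum>S\<in>Pow (set xs). f (flip S E'))" using Cons.IH[OF d] .
  have G2: "?G (E'(x := - E' x)) = (\<Sum>S\<in>Pow (set xs). f (flip (insert x S) E'))"
  proof -
    have "?G (E'(x := - E' x)) = (\<Sum>S\<in>Pow (set xs). f (flip S (E'(x := - E' x))))" by (rule Cons.IH[OF d])
    also have "\<dots> = (\<Sum>S\<in>Pow (set xs). f (flip (insert x S) E'))"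
    proof -
      have hf: "f (flip S (E'(x := - E' x))) = f (flip (insert x S) E')" if "S \<in> Pow (set xs)" for S
      proof -
        have xS: "x \<notin> S" using that x by auto
        show ?thesis by (simp only: flip_upd[OF xS])
      qed
      show ?thesis by (intro sum.cong refl) (simp only: hf)
    qed
    finally show ?thesis .
  qed
  have "foldr one_plus_S (x # xs) f E' = ?G E' + ?G (E'(x := - E' x))"
    by (simp add: one_plus_S_def refl_op_def)
  also have "\<dots> = (\<Sum>S\<in>Pow (set (x # xs)). f (flip S E'))"
    unfolding G1 G2 using x by (simp add: sum_Pow_insert)
  finally show ?case .
qed

lemma ops_prod_one_plus_c_S:
  "finite J \<Longrightarrow> ops_prod (\<lambda>j. one_plus_c_S (c j) j) J f E' = (\<Sum>S\<in>Pow J. wt c J S * f (flip S E'))"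
  unfolding ops_prod_def by (subst foldr_one_plus_c_S) simp_all

lemma ops_prod_c_one_plus_S:
  "finite J \<Longrightarrow> ops_prod (\<lambda>j. c_one_plus_S (c j) j) J f E' = (\<Prod>j\<in>J. c j) * (\<Sum>S\<in>Pow J. f (flip S E'))"
  unfolding ops_prod_def by (subst foldr_c_one_plus_S) simp_all

lemma ops_prod_one_plus_S:
  "finite J \<Longrightarrow> ops_prod one_plus_S J f E' = (\<Sum>S\<in>Pow J. f (flip S E'))"
  unfolding ops_prod_def by (subst foldr_one_plus_S) simp_all

lemma comb_identity:
  fixes c :: "nat \<Rightarrow> 'a::comm_ring_1"
  assumes "finite A"
  shows "(\<Sum>J\<in>Pow A. (\<Prod>j\<in>J. c j) * (\<Sum>S\<in>Pow J. h S)) = (\<Sum>S\<in>Pow A. wt c A S * h S)"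
  using assms
proof (induction A arbitrary: h rule: finite_induct)
  case empty
  then show ?case by (simp add: wt_def)
next
  case (insert x A)
  have fin: "finite J" if "J \<in> Pow A" for J using insert.hyps(1) that finite_subset by auto
  have xJ: "x \<notin> J" if "J \<in> Pow A" for J using insert.hyps(2) that by auto
  have "(\<Sum>J\<in>Pow (insert x A). (\<Prod>j\<in>J. c j) * (\<Sum>S\<in>Pow J. h S))
     = (\<Sum>J\<in>Pow A. (\<Prod>j\<in>J. c j) * (\<Sum>S\<in>Pow J. h S))
       + (\<Sum>J\<in>Pow A. (\<Prod>j\<in>insert x J. c j) * (\<Sum>S\<in>Pow (insert x J). h S))"
    using insert.hyps by (simp add: sum_Pow_insert)
  also have "(\<Sum>J\<in>Pow A. (\<Prod>j\<in>insert x J. c j) * (\<Sum>S\<in>Pow (insert x J). h S))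
     = c x * (\<Sum>J\<in>Pow A. (\<Prod>j\<in>J. c j) * (\<Sum>S\<in>Pow J. h S))
       + c x * (\<Sum>J\<in>Pow A. (\<Prod>j\<in>J. c j) * (\<Sum>S\<in>Pow J. h (insert x S)))"
  proof -
    have "(\<Prod>j\<in>insert x J. c j) * (\<Sum>S\<in>Pow (insert x J). h S)
        = c x * ((\<Prod>j\<in>J. c j) * (\<Sum>S\<in>Pow J. h S)) + c x * ((\<Prod>j\<in>J. c j) * (\<Sum>S\<in>Pow J. h (insert x S)))"
      if "J \<in> Pow A" for J
      using fin[OF that] xJ[OF that] by (simp add: sum_Pow_insert algebra_simps)
    then show ?thesis by (simp add: sum.distrib sum_distrib_left)
  qed
  also have "(\<Sum>J\<in>Pow A. (\<Prod>j\<in>J. c j) * (\<Sum>S\<in>Pow J. h S)) = (\<Sum>S\<in>Pow A. wt c A S * h S)"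
    by (rule insert.IH)
  also have "(\<Sum>J\<in>Pow A. (\<Prod>j\<in>J. c j) * (\<Sum>S\<in>Pow J. h (insert x S))) = (\<Sum>S\<in>Pow A. wt c A S * h (insert x S))"
    by (rule insert.IH)
  also have "(\<Sum>S\<in>Pow A. wt c A S * h S) + (c x * (\<Sum>S\<in>Pow A. wt c A S * h S) + c x * (\<Sum>S\<in>Pow A. wt c A S * h (insert x S)))
      = (\<Sum>S\<in>Pow (insert x A). wt c (insert x A) S * h S)"
  proof -
    have "(\<Sum>S\<in>Pow (insert x A). wt c (insert x A) S * h S)
      = (\<Sum>S\<in>Pow A. wt c (insert x A) S * h S) + (\<Sum>S\<in>Pow A. wt c (insert x A) (insert x S) * h (insert x S))"
      using insert.hyps by (simp add: sum_Pow_insert)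
    also have "(\<Sum>S\<in>Pow A. wt c (insert x A) S * h S) = (\<Sum>S\<in>Pow A. (1 + c x) * (wt c A S * h S))"
      using insert.hyps xJ by (intro sum.cong refl) (simp add: wt_insert)
    also have "(\<Sum>S\<in>Pow A. wt c (insert x A) (insert x S) * h (insert x S)) = (\<Sum>S\<in>Pow A. c x * (wt c A S * h (insert x S)))"
      using insert.hyps by (intro sum.cong refl) (simp add: wt_insert wt_insert_set)
    finally show ?thesis by (simp add: sum.distrib sum_distrib_left algebra_simps)
  qed
  finally show ?case by (simp add: algebra_simps)
qed



lemma D0_flip: "D0 I p (flip S E) = - (1 / (\<i> * of_real p - of_real (Xs E I S)) - 1 / (\<i> * of_real p + of_real (Xs E I S)))"
  by (simp add: D0_def flip_def Xs_def)

lemma Xs_compl: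
  assumes "S \<subseteq> {..<I}"
  shows "Xs E I ({..<I} - S) = - Xs E I S"
  unfolding Xs_def by (simp add: sum_negf[symmetric]) (intro sum.cong refl; auto)

lemma compl_sum:
  fixes g :: "nat set \<Rightarrow> 'a::comm_monoid_add"
  shows "(\<Sum>S\<in>Pow A. g (A - S)) = (\<Sum>S\<in>Pow A. g S)"
  by (rule sum.reindex_bij_witness[where i = "\<lambda>S. A - S" and j = "\<lambda>S. A - S"]) auto

lemma part_i:
  "(\<Sum>S\<in>Pow {..<I}. D0 I p (flip S E)) = 0"
proof -
  let ?h = "\<lambda>S. D0 I p (flip S E)"
  have "(\<Sum>S\<in>Pow {..<I}. ?h S) = (\<Sum>S\<in>Pow {..<I}. ?h ({..<I} - S))"
    by (rule compl_sum[symmetric])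
  also have "\<dots> = (\<Sum>S\<in>Pow {..<I}. - ?h S)"
    by (intro sum.cong refl) (simp add: D0_flip Xs_compl)
  also have "\<dots> = - (\<Sum>S\<in>Pow {..<I}. ?h S)" by (simp add: sum_negf)
  finally show ?thesis by simp
qed

lemma wt_exp:
  assumes T: "T > 0" and E: "\<forall>j<I. E j > 0" and S: "S \<subseteq> {..<I}"
  shows "wt (\<lambda>j. bose T (E j)) {..<I} S * exp (- Xs E I S / T) = wt (\<lambda>j. bose T (E j)) {..<I} ({..<I} - S)"
proof -
  have "exp (- Xs E I S / T) = (\<Prod>j<I. exp (- (if j \<in> S then - E j else E j) / T))"
    unfolding Xs_def by (simp add: exp_sum[symmetric] sum_negf[symmetric] sum_divide_distrib)
  then have "wt (\<lambda>j. bose T (E j)) {..<I} S * exp (- Xs E I S / T)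
     = (\<Prod>j<I. (if j \<in> S then bose T (E j) else 1 + bose T (E j)) * exp (- (if j \<in> S then - E j else E j) / T))"
    unfolding wt_def by (simp add: prod.distrib)
  also have "\<dots> = (\<Prod>j<I. if j \<in> {..<I} - S then bose T (E j) else 1 + bose T (E j))"
  proof (intro prod.cong refl)
    fix j assume j: "j \<in> {..<I}"
    define e where "e = exp (E j / T)"
    have "E j > 0" using E j by auto
    then have e1: "e \<noteq> 1" using T unfolding e_def by simp
    have e0: "e > 0" unfolding e_def by simp
    have em: "exp (- E j / T) = 1 / e" unfolding e_def by (simp add: exp_minus inverse_eq_divide)
    have b: "bose T (E j) = 1 / (e - 1)" unfolding bose_def e_def ..
    have em2: "exp (- (E j / T)) = 1 / e" using em by simp
    have "e - 1 \<noteq> 0" using e1 by simp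
    then show "(if j \<in> S then bose T (E j) else 1 + bose T (E j)) * exp (- (if j \<in> S then - E j else E j) / T)
      = (if j \<in> {..<I} - S then bose T (E j) else 1 + bose T (E j))"
      using j e0 by (cases "j \<in> S") (simp_all add: b em em2 e_def[symmetric] field_simps)
  qed
  finally show ?thesis unfolding wt_def .
qed

lemma wt_of_real: "wt (\<lambda>j. complex_of_real (c j)) A S = of_real (wt c A S)"
  unfolding wt_def of_real_prod by (intro prod.cong refl) auto

lemma Form_D0:
  assumes T: "T > 0" and E: "\<forall>j<I. E j > 0" and p: "p = 2 * pi * T * of_int m"
    and nr: "\<And>S. S \<subseteq> {..<I} \<Longrightarrow> \<i> * complex_of_real p - of_real (Xs E I S) \<noteq> 0"
  shows "Form T E I m = (\<Sum>S\<in>Pow {..<I}. of_real (wt (\<lambda>j. bose T (E j)) {..<I} S) * D0 I p (flip S E))"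
proof -
  let ?A = "{..<I}"
  let ?W = "\<lambda>S. complex_of_real (wt (\<lambda>j. bose T (E j)) {..<I} S)"
  let ?X = "\<lambda>S. complex_of_real (Xs E I S)"
  have Fh: "Fh T m (Xs E I S) = (of_real (exp (- Xs E I S / T)) - 1) / (\<i> * of_real p - ?X S)" if "S \<in> Pow ?A" for S
  proof -
    have "\<not> (m = 0 \<and> Xs E I S = 0)" using nr[of S] that p by auto
    then show ?thesis unfolding Fh_def p by auto
  qed
  have "Form T E I m = (\<Sum>S\<in>Pow ?A. ?W S * of_real (exp (- Xs E I S / T)) / (\<i> * of_real p - ?X S)
      - ?W S / (\<i> * of_real p - ?X S))"
    unfolding Form_def by (intro sum.cong refl) (simp add: Fh diff_divide_distrib algebra_simps)
  also have "\<dots> = (\<Sum>S\<in>Pow ?A. ?W S * of_real (exp (- Xs E I S / T)) / (\<i> * of_real p - ?X S))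
      - (\<Sum>S\<in>Pow ?A. ?W S / (\<i> * of_real p - ?X S))"
    by (simp add: sum_subtractf)
  also have "(\<Sum>S\<in>Pow ?A. ?W S * of_real (exp (- Xs E I S / T)) / (\<i> * of_real p - ?X S))
      = (\<Sum>S\<in>Pow ?A. ?W (?A - S) / (\<i> * of_real p - ?X S))"
  proof (intro sum.cong refl)
    fix S assume "S \<in> Pow ?A"
    then have "wt (\<lambda>j. bose T (E j)) {..<I} S * exp (- Xs E I S / T) = wt (\<lambda>j. bose T (E j)) {..<I} ({..<I} - S)"
      using wt_exp[OF T E] by auto
    then show "?W S * of_real (exp (- Xs E I S / T)) / (\<i> * of_real p - ?X S) = ?W (?A - S) / (\<i> * of_real p - ?X S)"
      by (metis of_real_mult)
  qed
  also have "\<dots> = (\<Sum>S\<in>Pow ?A. ?W (?A - (?A - S)) / (\<i> * of_real p - ?X (?A - S)))"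
    by (rule compl_sum[symmetric])
  also have "\<dots> = (\<Sum>S\<in>Pow ?A. ?W S / (\<i> * of_real p + ?X S))"
    by (intro sum.cong refl) (auto simp: Xs_compl double_diff)
  finally have "Form T E I m = (\<Sum>S\<in>Pow ?A. ?W S * (1 / (\<i> * of_real p + ?X S) - 1 / (\<i> * of_real p - ?X S)))"
    by (simp add: sum_subtractf algebra_simps)
  also have "\<dots> = (\<Sum>S\<in>Pow ?A. ?W S * D0 I p (flip S E))"
    by (intro sum.cong refl) (simp add: D0_flip)
  finally show ?thesis .
qed

lemma Dmats_Form:
  assumes T: "T > 0" and I: "I \<ge> 1" and E: "\<forall>j<I. E j > 0"
  shows "complex_of_real (Dmats I m E T) = Form T E I m"
proof -
  note M = main_M[OF T E, of m]
  define C where "C = T ^ I * (\<Prod>j<I. 2 * E j)"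
  have C0: "C \<noteq> 0" unfolding C_def using T E by auto
  define g where "g = (\<lambda>n::nat \<Rightarrow> int. \<Prod>j<I. 1 / ((2 * pi * T * of_int (n j))\<^sup>2 + (E j)\<^sup>2))"
  have "(\<lambda>n. T ^ I * (\<Prod>j<I. Dl T (E j) (n j))) = (\<lambda>n. C * g n)"
    unfolding C_def g_def Dl_def by (auto simp: fun_eq_iff prod.distrib[symmetric] intro!: prod.cong)
  with M have "((\<lambda>n. C * g n) has_sum (T * Re (Form T E I m))) (Qs I m)" by simp
  then have "(g has_sum (T * Re (Form T E I m) / C)) (Qs I m)" using C0 by (simp add: has_sum_cmult_right_iff)
  then have inf: "infsum g (Qs I m) = T * Re (Form T E I m) / C" by (rule infsumI)
  have "Dmats I m E T = (\<Prod>j<I. 2 * E j) * T ^ (I - 1) * (T * Re (Form T E I m) / C)"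
    unfolding Dmats_def inf[symmetric] g_def Qs_def ..
  also have "\<dots> = Re (Form T E I m)"
  proof -
    have "T ^ I = T ^ (I - 1) * T" using I by (metis Suc_diff_1 less_le_trans power_Suc2 zero_less_one)
    then show ?thesis unfolding C_def using C0[unfolded C_def] by (simp add: field_simps)
  qed
  finally show ?thesis using conjunct2[OF M] by simp
qed



theorem mainTheorem1:
  fixes T :: real and I :: nat and E :: "nat \<Rightarrow> real" and m :: int and p :: real
  assumes T_pos: "T > 0"
    and I_pos: "I \<ge> 1"
    and E_pos: "\<And>j. j < I \<Longrightarrow> E j > 0"
    and p_def: "p = 2 * pi * T * of_int m"
    and nonres: "\<And>\<sigma>. \<sigma> \<in> {..<I} \<rightarrow> {-1, 1 :: real} \<Longrightarrow>
                  \<i> * complex_of_real p - complex_of_real (\<Sum>j<I. \<sigma> j * E j) \<noteq> 0"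
  shows "ops_prod one_plus_S {..<I} (D0 I p) E = 0
       \<and> complex_of_real (Dmats I m E T)
           = ops_prod (\<lambda>j. one_plus_c_S (complex_of_real (bose T (E j))) j) {..<I} (D0 I p) E
       \<and> complex_of_real (Dmats I m E T)
           = (\<Sum>J \<in> {J. J \<subset> {..<I}}.
                ops_prod (\<lambda>j. c_one_plus_S (complex_of_real (bose T (E j))) j) J (D0 I p) E)"
proof -
  let ?A = "{..<I}"
  let ?c = "\<lambda>j. complex_of_real (bose T (E j))"
  let ?h = "\<lambda>S. D0 I p (flip S E)"
  have E: "\<forall>j<I. E j > 0" using E_pos by auto
  have nr: "\<i> * complex_of_real p - of_real (Xs E I S) \<noteq> 0" if "S \<subseteq> {..<I}" for S
  proof -
    have "(\<lambda>j. if j \<in> S then -1 else 1 :: real) \<in> {..<I} \<rightarrow> {-1, 1}" by auto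
    from nonres[OF this] have "\<i> * complex_of_real p - complex_of_real (\<Sum>j<I. (if j \<in> S then -1 else 1) * E j) \<noteq> 0" .
    moreover have "(\<Sum>j<I. (if j \<in> S then -1 else 1) * E j) = Xs E I S"
      unfolding Xs_def by (intro sum.cong refl) auto
    ultimately show ?thesis by simp
  qed
  have i: "ops_prod one_plus_S ?A (D0 I p) E = 0"
    using ops_prod_one_plus_S[of ?A "D0 I p" E] part_i[of I p E] by simp
  have ii0: "ops_prod (\<lambda>j. one_plus_c_S (?c j) j) ?A (D0 I p) E = (\<Sum>S\<in>Pow ?A. wt ?c ?A S * ?h S)"
    by (rule ops_prod_one_plus_c_S) simp
  have ii1: "(\<Sum>S\<in>Pow ?A. wt ?c ?A S * ?h S) = complex_of_real (Dmats I m E T)"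
    using Dmats_Form[OF T_pos I_pos E, of m] Form_D0[OF T_pos E p_def nr] by (simp add: wt_of_real)
  have iii: "(\<Sum>J \<in> {J. J \<subset> ?A}. ops_prod (\<lambda>j. c_one_plus_S (?c j) j) J (D0 I p) E)
      = (\<Sum>S\<in>Pow ?A. wt ?c ?A S * ?h S)"
  proof -
    have "(\<Sum>J \<in> {J. J \<subset> ?A}. ops_prod (\<lambda>j. c_one_plus_S (?c j) j) J (D0 I p) E)
        = (\<Sum>J \<in> {J. J \<subset> ?A}. (\<Prod>j\<in>J. ?c j) * (\<Sum>S\<in>Pow J. ?h S))"
    proof (intro sum.cong refl)
      fix J assume "J \<in> {J. J \<subset> ?A}"
      then have "finite J" by (auto intro: finite_subset)
      then show "ops_prod (\<lambda>j. c_one_plus_S (?c j) j) J (D0 I p) E = (\<Prod>j\<in>J. ?c j) * (\<Sum>S\<in>Pow J. ?h S)"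
        by (rule ops_prod_c_one_plus_S)
    qed
    also have seteq: "{J. J \<subset> ?A} = Pow ?A - {?A}" by auto
    also have "(\<Sum>J \<in> Pow ?A - {?A}. (\<Prod>j\<in>J. ?c j) * (\<Sum>S\<in>Pow J. ?h S))
        = (\<Sum>J \<in> Pow ?A. (\<Prod>j\<in>J. ?c j) * (\<Sum>S\<in>Pow J. ?h S)) - (\<Prod>j\<in>?A. ?c j) * (\<Sum>S\<in>Pow ?A. ?h S)"
      by (subst sum_diff1) auto
    also have "(\<Sum>S\<in>Pow ?A. ?h S) = 0" by (rule part_i)
    also have "(\<Sum>J \<in> Pow ?A. (\<Prod>j\<in>J. ?c j) * (\<Sum>S\<in>Pow J. ?h S)) = (\<Sum>S\<in>Pow ?A. wt ?c ?A S * ?h S)"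
      by (rule comb_identity) simp
    finally show ?thesis using seteq by simp
  qed
  show ?thesis using i ii0 ii1 iii by simp
qed


end
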